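(* Let $G_1$ and $G_2$ be finite simple undirected graphs. Then $G_1\cong G_2$ if and only if $\sigma(G_1)=\sigma(G_2)$.
   Context: A clique is a set of pairwise adjacent vertices; a set $S$ of cliques of $G$ is a total clique covering if every vertex lies in some member of $S$ and every edge has both endpoints in some member of $S$; $\theta_t(G)$ is the minimum size of a total clique covering. The code $\sigma(G)$ of a graph $G=(V,E)$ with $|V|=m$ and $s\ge0$ isolated vertices is defined as follows. Let $k=\theta_t(G)-s$. For a total clique covering $S=\{C_1,\ldots,C_{s+k}\}$ with $|S|=\theta_t(G)$, where $C_1,\ldots,C_s$ are the singleton cliques of the isolated vertices, and for each bijective assignment of the first $k$ primes to the cliques $C_{s+1},\ldots,C_{s+k}$, label each vertex $v$ by $1$ if $v$ is isolated and otherwise by the product of the primes assigned to the cliques among $C_{s+1},\ldots,C_{s+k}$ that contain $v$; listing these labels in non-decreasing order gives a sequence in $\mathbb{Z}^m$ (a coding sequence). Let $\sigma[S]$ be the lexicographically least of the (at most $k!$) sequences so obtained. Then $\sigma(G)$ is the lexicographically least element of $\{\sigma[S] : S \text{ a total clique covering of } G \text{ with } |S|=\theta_t(G)\}$. *)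

theory Defs
  imports Main "HOL-Library.Multiset" "HOL-Library.List_Lexorder" "HOL-Computational_Algebra.Primes"
begin

definition simple_graph :: "'a set \<Rightarrow> ('a \<times> 'a) set \<Rightarrow> bool" where
  "simple_graph V E \<longleftrightarrow> finite V \<and> E \<subseteq> V \<times> V \<and> sym E \<and> irrefl E"

definition graph_iso :: "'a set \<Rightarrow> ('a \<times> 'a) set \<Rightarrow> 'b set \<Rightarrow> ('b \<times> 'b) set \<Rightarrow> bool" where
  "graph_iso V1 E1 V2 E2 \<longleftrightarrow> (\<exists>f. bij_betw f V1 V2 \<and>
      (\<forall>x\<in>V1. \<forall>y\<in>V1. (x, y) \<in> E1 \<longleftrightarrow> (f x, f y) \<in> E2))"

definition is_clique :: "'a set \<Rightarrow> ('a \<times> 'a) set \<Rightarrow> 'a set \<Rightarrow> bool" where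
  "is_clique V E C \<longleftrightarrow> C \<subseteq> V \<and> (\<forall>x\<in>C. \<forall>y\<in>C. x \<noteq> y \<longrightarrow> (x, y) \<in> E)"

definition total_clique_covering :: "'a set \<Rightarrow> ('a \<times> 'a) set \<Rightarrow> 'a set set \<Rightarrow> bool" where
  "total_clique_covering V E S \<longleftrightarrow> (\<forall>C\<in>S. is_clique V E C)
     \<and> (\<forall>v\<in>V. \<exists>C\<in>S. v \<in> C)
     \<and> (\<forall>(x, y)\<in>E. \<exists>C\<in>S. x \<in> C \<and> y \<in> C)"

definition theta_t :: "'a set \<Rightarrow> ('a \<times> 'a) set \<Rightarrow> nat" where
  "theta_t V E = (LEAST n. \<exists>S. total_clique_covering V E S \<and> finite S \<and> card S = n)"

definition isolated :: "'a set \<Rightarrow> ('a \<times> 'a) set \<Rightarrow> 'a \<Rightarrow> bool" where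
  "isolated V E v \<longleftrightarrow> v \<in> V \<and> (\<forall>u. (v, u) \<notin> E)"

definition isolated_vertices :: "'a set \<Rightarrow> ('a \<times> 'a) set \<Rightarrow> 'a set" where
  "isolated_vertices V E = {v. isolated V E v}"

definition first_primes :: "nat \<Rightarrow> nat set" where
  "first_primes k = {p. prime p \<and> card {q. prime q \<and> q < p} < k}"

definition coding_sequence :: "'a set \<Rightarrow> ('a \<times> 'a) set \<Rightarrow> 'a set set \<Rightarrow> ('a set \<Rightarrow> nat) \<Rightarrow> nat list" where
  "coding_sequence V E S p =
     sorted_list_of_multiset
       (image_mset (\<lambda>v. if isolated V E v then 1
                        else (\<Prod>C\<in>{C \<in> S - (\<lambda>u. {u}) ` isolated_vertices V E. v \<in> C}. p C))
                   (mset_set V))"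

definition sigma_cover :: "'a set \<Rightarrow> ('a \<times> 'a) set \<Rightarrow> 'a set set \<Rightarrow> nat list" where
  "sigma_cover V E S =
     (let k = theta_t V E - card (isolated_vertices V E) in
      Min {coding_sequence V E S p | p.
             bij_betw p (S - (\<lambda>u. {u}) ` isolated_vertices V E) (first_primes k)})"

text \<open>The code sigma(G); lists compared lexicographically (List_Lexorder).\<close>
definition sigma_code :: "'a set \<Rightarrow> ('a \<times> 'a) set \<Rightarrow> nat list" where
  "sigma_code V E = Min {sigma_cover V E S | S.
      total_clique_covering V E S \<and> finite S \<and> card S = theta_t V E}"

end

theory Submission
  imports Defs "HOL-Library.Infinite_Set" "HOL-Library.FuncSet"
begin


lemma first_primes_card: "finite (first_primes k) \<and> card (first_primes k) = k"
proof -
  let ?P = "{p::nat. prime p}"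
  define e where "e = enumerate ?P"
  have inf: "infinite ?P" using primes_infinite by simp
  have sm: "strict_mono e" unfolding e_def using strict_mono_enumerate[OF inf] .
  have rg: "range e = ?P" unfolding e_def using range_enumerate[OF inf] .
  have pi: "card {q. prime q \<and> q < e n} = n" for n
  proof -
    have "{q. prime q \<and> q < e n} = e ` {..<n}"
    proof
      show "{q. prime q \<and> q < e n} \<subseteq> e ` {..<n}"
      proof
        fix q assume "q \<in> {q. prime q \<and> q < e n}"
        then have q: "prime q" "q < e n" by auto
        then obtain m where m: "q = e m" using rg by (metis mem_Collect_eq rangeE)
        then have "m < n" using q sm by (metis strict_mono_less)
        then show "q \<in> e ` {..<n}" using m by auto
      qed
      show "e ` {..<n} \<subseteq> {q. prime q \<and> q < e n}"
        using rg sm by (auto simp: strict_mono_less)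
    qed
    moreover have "inj e" using sm strict_mono_imp_inj_on by blast
    ultimately show ?thesis by (simp add: card_image inj_on_subset)
  qed
  have "first_primes k = e ` {..<k}"
  proof
    show "first_primes k \<subseteq> e ` {..<k}"
    proof
      fix p assume "p \<in> first_primes k"
      then have p: "prime p" "card {q. prime q \<and> q < p} < k" unfolding first_primes_def by auto
      then obtain m where m: "p = e m" using rg by (metis mem_Collect_eq rangeE)
      then show "p \<in> e ` {..<k}" using p pi by auto
    qed
    show "e ` {..<k} \<subseteq> first_primes k"
      using rg pi unfolding first_primes_def by auto
  qed
  moreover have "inj e" using sm strict_mono_imp_inj_on by blast
  ultimately show ?thesis by (simp add: card_image inj_on_subset)
qed

lemma first_primes_prime: "p \<in> first_primes k \<Longrightarrow> prime p"
  unfolding first_primes_def by auto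



abbreviation IS :: "'a set \<Rightarrow> ('a \<times> 'a) set \<Rightarrow> 'a set set" where
  "IS V E \<equiv> (\<lambda>u. {u}) ` isolated_vertices V E"

definition lab :: "'a set \<Rightarrow> ('a \<times> 'a) set \<Rightarrow> 'a set set \<Rightarrow> ('a set \<Rightarrow> nat) \<Rightarrow> 'a \<Rightarrow> nat" where
  "lab V E S p v = (if isolated V E v then 1
                        else (\<Prod>C\<in>{C \<in> S - IS V E. v \<in> C}. p C))"

lemma coding_lab: "coding_sequence V E S p = sorted_list_of_multiset (image_mset (lab V E S p) (mset_set V))"
  unfolding coding_sequence_def lab_def by simp

lemma cov_sub: "total_clique_covering V E S \<Longrightarrow> S \<subseteq> Pow V"
  unfolding total_clique_covering_def is_clique_def by auto

lemma cov_exists: assumes "simple_graph V E" shows "\<exists>S. total_clique_covering V E S \<and> finite S"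
proof -
  let ?S = "(\<lambda>v. {v}) ` V \<union> (\<lambda>(x,y). {x,y}) ` E"
  have fV: "finite V" and EV: "E \<subseteq> V \<times> V" and sy: "sym E" using assms unfolding simple_graph_def by auto
  have "finite E" using fV EV finite_subset by blast
  then have "finite ?S" using fV by auto
  moreover have "total_clique_covering V E ?S"
    unfolding total_clique_covering_def is_clique_def
    using EV sy by (auto dest: symD)
  ultimately show ?thesis by blast
qed

lemma theta_ex: assumes "simple_graph V E"
  shows "\<exists>S. total_clique_covering V E S \<and> finite S \<and> card S = theta_t V E"
proof -
  obtain S where "total_clique_covering V E S \<and> finite S" using cov_exists[OF assms] by blast
  then have "\<exists>n S. total_clique_covering V E S \<and> finite S \<and> card S = n" by blast
  then show ?thesis unfolding theta_t_def by (rule LeastI_ex)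
qed

lemma theta_le: "total_clique_covering V E S \<Longrightarrow> finite S \<Longrightarrow> theta_t V E \<le> card S"
  unfolding theta_t_def by (rule Least_le) blast

lemma mincov_finite: assumes "finite V"
  shows "finite {S. total_clique_covering V E S \<and> finite S \<and> card S = n}"
proof (rule finite_subset)
  show "{S. total_clique_covering V E S \<and> finite S \<and> card S = n} \<subseteq> Pow (Pow V)"
    using cov_sub by blast
  show "finite (Pow (Pow V))" using assms by simp
qed

lemma iso_in: assumes "total_clique_covering V E S" shows "IS V E \<subseteq> S"
proof
  fix X assume "X \<in> IS V E"
  then obtain v where v: "X = {v}" "isolated V E v" unfolding isolated_vertices_def by auto
  then have "v \<in> V" unfolding isolated_def by auto
  then obtain C where C: "C \<in> S" "v \<in> C" using assms unfolding total_clique_covering_def by auto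
  then have "is_clique V E C" using assms unfolding total_clique_covering_def by auto
  then have "C = {v}" using C v unfolding is_clique_def isolated_def by auto
  then show "X \<in> S" using C v by simp
qed

lemma card_S': assumes "total_clique_covering V E S" "finite V" "finite S"
  shows "card (S - IS V E) = card S - card (isolated_vertices V E)"
proof -
  have fi: "finite (isolated_vertices V E)"
    using assms(2) by (rule finite_subset[rotated]) (auto simp: isolated_vertices_def isolated_def)
  have "card (IS V E) = card (isolated_vertices V E)"
    by (rule card_image) (auto simp: inj_on_def)
  then show ?thesis using card_Diff_subset[OF finite_imageI[OF fi] iso_in[OF assms(1)]] by simp
qed

lemma edge_iff_clique: assumes "simple_graph V E" "total_clique_covering V E S" "u \<in> V" "v \<in> V"
  shows "(u,v) \<in> E \<longleftrightarrow> u \<noteq> v \<and> (\<exists>C\<in>S - IS V E. u \<in> C \<and> v \<in> C)"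
proof
  assume e: "(u,v) \<in> E"
  then have "u \<noteq> v" using assms(1) unfolding simple_graph_def irrefl_def by auto
  moreover obtain C where "C \<in> S" "u \<in> C" "v \<in> C" using e assms(2) unfolding total_clique_covering_def by fastforce
  moreover then have "C \<notin> IS V E" using \<open>u \<noteq> v\<close> by auto
  ultimately show "u \<noteq> v \<and> (\<exists>C\<in>S - IS V E. u \<in> C \<and> v \<in> C)" by blast
next
  assume "u \<noteq> v \<and> (\<exists>C\<in>S - IS V E. u \<in> C \<and> v \<in> C)"
  then show "(u,v) \<in> E" using assms(2) unfolding total_clique_covering_def is_clique_def by auto
qed

definition share :: "nat \<Rightarrow> nat \<Rightarrow> bool" where
  "share a b \<longleftrightarrow> (\<exists>q. prime q \<and> q dvd a \<and> q dvd b)"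

lemma share_1: "\<not> share 1 b" "\<not> share a 1"
  unfolding share_def by auto

lemma dvd_lab: assumes "finite S" "inj_on p (S - IS V E)" "\<And>C. C \<in> S - IS V E \<Longrightarrow> prime (p C)"
  "prime q" "\<not> isolated V E v"
  shows "q dvd lab V E S p v \<longleftrightarrow> (\<exists>C\<in>S - IS V E. v \<in> C \<and> q = p C)"
proof -
  have "q dvd lab V E S p v \<longleftrightarrow> (\<exists>C\<in>{C \<in> S - IS V E. v \<in> C}. q dvd p C)"
  proof -
    have "finite {C \<in> S - IS V E. v \<in> C}" using assms(1) by simp
    from prime_dvd_prod_iff[OF this assms(4), of p] show ?thesis unfolding lab_def using assms(5) by simp
  qed
  also have "\<dots> \<longleftrightarrow> (\<exists>C\<in>S - IS V E. v \<in> C \<and> q = p C)"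
  proof -
    have "q dvd p C \<longleftrightarrow> q = p C" if "C \<in> S - IS V E" for C
      using assms(3)[OF that] assms(4) primes_dvd_imp_eq by auto
    then show ?thesis by auto
  qed
  finally show ?thesis .
qed

lemma edge_iff_share: assumes "simple_graph V E" "total_clique_covering V E S" "finite S"
  "inj_on p (S - IS V E)" "\<And>C. C \<in> S - IS V E \<Longrightarrow> prime (p C)" "u \<in> V" "v \<in> V"
  shows "(u,v) \<in> E \<longleftrightarrow> u \<noteq> v \<and> share (lab V E S p u) (lab V E S p v)"
proof (cases "isolated V E u \<or> isolated V E v")
  case True
  have sy: "sym E" using assms(1) unfolding simple_graph_def by auto
  have "(u,v) \<notin> E" using True sy unfolding isolated_def sym_def by blast
  moreover have "\<not> share (lab V E S p u) (lab V E S p v)"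
  proof
    assume sh: "share (lab V E S p u) (lab V E S p v)"
    from True have "lab V E S p u = 1 \<or> lab V E S p v = 1" unfolding lab_def by auto
    then show False using sh share_1 by metis
  qed
  ultimately show ?thesis by blast
next
  case False
  have "share (lab V E S p u) (lab V E S p v) \<longleftrightarrow> (\<exists>C\<in>S - IS V E. u \<in> C \<and> v \<in> C)"
  proof
    assume "share (lab V E S p u) (lab V E S p v)"
    then obtain q where q: "prime q" "q dvd lab V E S p u" "q dvd lab V E S p v" unfolding share_def by auto
    have "\<exists>C\<in>S - IS V E. u \<in> C \<and> q = p C" using dvd_lab[OF assms(3-5) q(1), of u] False q(2) by blast
    moreover have "\<exists>C\<in>S - IS V E. v \<in> C \<and> q = p C" using dvd_lab[OF assms(3-5) q(1), of v] False q(3) by blast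
    ultimately obtain C D where "C\<in>S - IS V E" "u \<in> C" "q = p C" "D\<in>S - IS V E" "v \<in> D" "q = p D"
      by blast
    then show "\<exists>C\<in>S - IS V E. u \<in> C \<and> v \<in> C" using assms(4) by (metis inj_onD)
  next
    assume "\<exists>C\<in>S - IS V E. u \<in> C \<and> v \<in> C"
    then obtain C where C: "C\<in>S - IS V E" "u \<in> C" "v \<in> C" by blast
    show "share (lab V E S p u) (lab V E S p v)"
    proof -
      have pc: "prime (p C)" using assms(5) C(1) by blast
      have "p C dvd lab V E S p u" using dvd_lab[OF assms(3-5) pc, of u] False C by blast
      moreover have "p C dvd lab V E S p v" using dvd_lab[OF assms(3-5) pc, of v] False C by blast
      ultimately show ?thesis unfolding share_def using pc by blast
    qed
  qed
  then show ?thesis using edge_iff_clique[OF assms(1,2,6,7)] by simp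
qed



lemma count_image_mset_set: assumes "finite A"
  shows "count (image_mset f (mset_set A)) c = card {x\<in>A. f x = c}"
proof -
  have "count (image_mset f (mset_set A)) c = (\<Sum>y\<in>f -` {c} \<inter> A. 1)"
    unfolding count_image_mset using assms by (intro sum.cong) auto
  also have "\<dots> = card {x\<in>A. f x = c}" by (simp add: Int_commute Collect_conj_eq vimage_def)
  finally show ?thesis .
qed

lemma mset_bij: assumes "finite A" "finite B" "image_mset f (mset_set A) = image_mset g (mset_set B)"
  shows "\<exists>h. bij_betw h A B \<and> (\<forall>x\<in>A. g (h x) = f x)"
proof -
  define F where "F c = {x\<in>A. f x = c}" for c
  define G where "G c = {x\<in>B. g x = c}" for c
  have cc: "card (F c) = card (G c)" for c
    using count_image_mset_set[OF assms(1), of f c] count_image_mset_set[OF assms(2), of g c] assms(3)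
    unfolding F_def G_def by simp
  have "\<exists>h. bij_betw h (F c) (G c)" for c
    by (rule finite_same_card_bij) (use assms cc in \<open>auto simp: F_def G_def\<close>)
  then obtain H where H: "\<And>c. bij_betw (H c) (F c) (G c)" by metis
  define h where "h x = H (f x) x" for x
  have hG: "h x \<in> G (f x)" if "x \<in> A" for x
    using H[of "f x"] that unfolding h_def F_def bij_betw_def by auto
  have hp: "\<forall>x\<in>A. g (h x) = f x" using hG unfolding G_def by auto
  have inj: "inj_on h A"
  proof (rule inj_onI)
    fix x y assume xy: "x \<in> A" "y \<in> A" "h x = h y"
    then have "f x = f y" using hp by metis
    then have "H (f x) x = H (f x) y" using xy(3) unfolding h_def by simp
    moreover have "x \<in> F (f x)" "y \<in> F (f x)" using xy \<open>f x = f y\<close> unfolding F_def by auto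
    ultimately show "x = y" using H[of "f x"] unfolding bij_betw_def inj_on_def by blast
  qed
  have "h ` A = B"
  proof
    show "h ` A \<subseteq> B" using hG unfolding G_def by auto
    show "B \<subseteq> h ` A"
    proof
      fix y assume y: "y \<in> B"
      then have "y \<in> G (g y)" unfolding G_def by auto
      then obtain x where x: "x \<in> F (g y)" "H (g y) x = y" using H[of "g y"] unfolding bij_betw_def by (metis imageE)
      then have "x \<in> A" "f x = g y" unfolding F_def by auto
      then have "y = h x" using x unfolding h_def by simp
      then show "y \<in> h ` A" using \<open>x \<in> A\<close> by blast
    qed
  qed
  then show ?thesis using inj hp unfolding bij_betw_def by blast
qed

definition cs :: "'a set \<Rightarrow> ('a \<times> 'a) set \<Rightarrow> 'a set set \<Rightarrow> nat list set" where
  "cs V E S = {coding_sequence V E S p | p.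
             bij_betw p (S - IS V E) (first_primes (theta_t V E - card (isolated_vertices V E)))}"

lemma sigma_cover_cs: "sigma_cover V E S = Min (cs V E S)"
  unfolding sigma_cover_def cs_def Let_def by simp

lemma coding_restrict: "coding_sequence V E S p = coding_sequence V E S (restrict p (S - IS V E))"
proof -
  have "lab V E S p v = lab V E S (restrict p (S - IS V E)) v" for v
    unfolding lab_def by (auto intro!: prod.cong simp: restrict_def)
  then show ?thesis unfolding coding_lab by presburger
qed

lemma cs_ne_fin: assumes "simple_graph V E" "total_clique_covering V E S" "finite S"
  "card S = theta_t V E"
  shows "finite (cs V E S) \<and> cs V E S \<noteq> {}"
proof -
  let ?k = "theta_t V E - card (isolated_vertices V E)"
  let ?P = "first_primes ?k"
  have fV: "finite V" using assms(1) unfolding simple_graph_def by auto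
  have ck: "card (S - IS V E) = ?k" using card_S'[OF assms(2) fV assms(3)] assms(4) by simp
  have fP: "finite ?P" "card ?P = ?k" using first_primes_card by auto
  obtain p where "bij_betw p (S - IS V E) ?P"
    using finite_same_card_bij[of "S - IS V E" ?P] assms(3) fP ck by auto
  then have ne: "cs V E S \<noteq> {}" unfolding cs_def by blast
  have "cs V E S \<subseteq> (\<lambda>q. coding_sequence V E S q) ` (PiE (S - IS V E) (\<lambda>_. ?P))"
  proof
    fix x assume "x \<in> cs V E S"
    then obtain p where p: "x = coding_sequence V E S p" "bij_betw p (S - IS V E) ?P"
      unfolding cs_def by blast
    then have "restrict p (S - IS V E) \<in> PiE (S - IS V E) (\<lambda>_. ?P)"
      unfolding bij_betw_def by (auto simp: restrict_PiE_iff)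
    then show "x \<in> (\<lambda>q. coding_sequence V E S q) ` (PiE (S - IS V E) (\<lambda>_. ?P))"
      using p(1) coding_restrict by blast
  qed
  moreover have "finite (PiE (S - IS V E) (\<lambda>_. ?P))"
    using assms(3) fP by (intro finite_PiE) auto
  ultimately have "finite (cs V E S)" using finite_subset by blast
  then show ?thesis using ne by blast
qed

definition SC :: "'a set \<Rightarrow> ('a \<times> 'a) set \<Rightarrow> nat list set" where
  "SC V E = {sigma_cover V E S | S. total_clique_covering V E S \<and> finite S \<and> card S = theta_t V E}"

lemma sigma_code_SC: "sigma_code V E = Min (SC V E)"
  unfolding sigma_code_def SC_def by simp

lemma rep: assumes "simple_graph V E"
  shows "\<exists>S p. total_clique_covering V E S \<and> finite S \<and> card S = theta_t V E \<and>
     bij_betw p (S - IS V E) (first_primes (theta_t V E - card (isolated_vertices V E))) \<and>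
     sigma_code V E = coding_sequence V E S p"
proof -
  have fV: "finite V" using assms unfolding simple_graph_def by auto
  have "SC V E = sigma_cover V E ` {S. total_clique_covering V E S \<and> finite S \<and> card S = theta_t V E}"
    unfolding SC_def by blast
  then have fin: "finite (SC V E)" using mincov_finite[OF fV] by simp
  have ne: "SC V E \<noteq> {}" using theta_ex[OF assms] unfolding SC_def by blast
  obtain S where S: "total_clique_covering V E S" "finite S" "card S = theta_t V E"
    "sigma_code V E = sigma_cover V E S"
  proof -
    have "Min (SC V E) \<in> SC V E" using Min_in[OF fin ne] .
    then show ?thesis using that unfolding sigma_code_SC SC_def by blast
  qed
  have "sigma_cover V E S \<in> cs V E S"
    unfolding sigma_cover_cs using cs_ne_fin[OF assms S(1-3)] Min_in by blast
  then show ?thesis using S unfolding cs_def by auto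
qed

lemma forward: assumes g1: "simple_graph V1 E1" and g2: "simple_graph V2 E2"
  and eq: "sigma_code V1 E1 = sigma_code V2 E2"
  shows "graph_iso V1 E1 V2 E2"
proof -
  obtain S1 p1 where S1: "total_clique_covering V1 E1 S1" "finite S1"
     "bij_betw p1 (S1 - IS V1 E1) (first_primes (theta_t V1 E1 - card (isolated_vertices V1 E1)))"
     "sigma_code V1 E1 = coding_sequence V1 E1 S1 p1"
    using rep[OF g1] by blast
  obtain S2 p2 where S2: "total_clique_covering V2 E2 S2" "finite S2"
     "bij_betw p2 (S2 - IS V2 E2) (first_primes (theta_t V2 E2 - card (isolated_vertices V2 E2)))"
     "sigma_code V2 E2 = coding_sequence V2 E2 S2 p2"
    using rep[OF g2] by blast
  have fV1: "finite V1" and fV2: "finite V2" using g1 g2 unfolding simple_graph_def by auto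
  have "image_mset (lab V1 E1 S1 p1) (mset_set V1) = image_mset (lab V2 E2 S2 p2) (mset_set V2)"
  proof -
    have "sorted_list_of_multiset (image_mset (lab V1 E1 S1 p1) (mset_set V1)) =
          sorted_list_of_multiset (image_mset (lab V2 E2 S2 p2) (mset_set V2))"
      using eq S1(4) S2(4) unfolding coding_lab by simp
    from arg_cong[OF this, of mset] show ?thesis by simp
  qed
  then obtain h where h: "bij_betw h V1 V2" "\<forall>x\<in>V1. lab V2 E2 S2 p2 (h x) = lab V1 E1 S1 p1 x"
    using mset_bij[OF fV1 fV2] by blast
  have pr1: "\<And>C. C \<in> S1 - IS V1 E1 \<Longrightarrow> prime (p1 C)"
    using S1(3) first_primes_prime unfolding bij_betw_def by blast
  have pr2: "\<And>C. C \<in> S2 - IS V2 E2 \<Longrightarrow> prime (p2 C)"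
    using S2(3) first_primes_prime unfolding bij_betw_def by blast
  have i1: "inj_on p1 (S1 - IS V1 E1)" and i2: "inj_on p2 (S2 - IS V2 E2)"
    using S1(3) S2(3) unfolding bij_betw_def by auto
  have "(x, y) \<in> E1 \<longleftrightarrow> (h x, h y) \<in> E2" if xy: "x \<in> V1" "y \<in> V1" for x y
  proof -
    have hx: "h x \<in> V2" "h y \<in> V2" using h(1) xy unfolding bij_betw_def by auto
    have "x \<noteq> y \<longleftrightarrow> h x \<noteq> h y" using h(1) xy unfolding bij_betw_def inj_on_def by auto
    moreover have "lab V2 E2 S2 p2 (h x) = lab V1 E1 S1 p1 x" "lab V2 E2 S2 p2 (h y) = lab V1 E1 S1 p1 y"
      using h(2) xy by auto
    ultimately show ?thesis
      using edge_iff_share[OF g1 S1(1,2) i1 pr1 xy] edge_iff_share[OF g2 S2(1,2) i2 pr2 hx]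
      by metis
  qed
  then show ?thesis unfolding graph_iso_def using h(1) by blast
qed



definition isof :: "('a \<Rightarrow> 'b) \<Rightarrow> 'a set \<Rightarrow> ('a \<times> 'a) set \<Rightarrow> 'b set \<Rightarrow> ('b \<times> 'b) set \<Rightarrow> bool" where
  "isof f V1 E1 V2 E2 \<longleftrightarrow> bij_betw f V1 V2 \<and> (\<forall>x\<in>V1. \<forall>y\<in>V1. (x, y) \<in> E1 \<longleftrightarrow> (f x, f y) \<in> E2)"

lemma isof_inv: assumes "isof f V1 E1 V2 E2" shows "isof (inv_into V1 f) V2 E2 V1 E1"
proof -
  have b: "bij_betw f V1 V2" and e: "\<forall>x\<in>V1. \<forall>y\<in>V1. (x, y) \<in> E1 \<longleftrightarrow> (f x, f y) \<in> E2"
    using assms unfolding isof_def by auto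
  have b2: "bij_betw (inv_into V1 f) V2 V1" using bij_betw_inv_into[OF b] .
  have "(x, y) \<in> E2 \<longleftrightarrow> (inv_into V1 f x, inv_into V1 f y) \<in> E1" if "x \<in> V2" "y \<in> V2" for x y
  proof -
    have gx: "inv_into V1 f x \<in> V1" "inv_into V1 f y \<in> V1" using b2 that unfolding bij_betw_def by auto
    have "f (inv_into V1 f x) = x" "f (inv_into V1 f y) = y"
      using b that by (auto simp: bij_betw_def f_inv_into_f)
    moreover have "(inv_into V1 f x, inv_into V1 f y) \<in> E1 \<longleftrightarrow> (f (inv_into V1 f x), f (inv_into V1 f y)) \<in> E2"
      using e gx by blast
    ultimately show ?thesis by simp
  qed
  then show ?thesis unfolding isof_def using b2 by blast
qed

lemma isof_bij: "isof f V1 E1 V2 E2 \<Longrightarrow> bij_betw f V1 V2" unfolding isof_def by auto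
lemma isof_edge: "isof f V1 E1 V2 E2 \<Longrightarrow> x \<in> V1 \<Longrightarrow> y \<in> V1 \<Longrightarrow> (x, y) \<in> E1 \<longleftrightarrow> (f x, f y) \<in> E2"
  unfolding isof_def by auto

lemma sgE: "simple_graph V E \<Longrightarrow> (x, y) \<in> E \<Longrightarrow> x \<in> V \<and> y \<in> V"
  unfolding simple_graph_def by auto

lemma cov_transport: assumes iso: "isof f V1 E1 V2 E2" and g2: "simple_graph V2 E2"
  and cov: "total_clique_covering V1 E1 S"
  shows "total_clique_covering V2 E2 ((`) f ` S)"
proof -
  have b: "bij_betw f V1 V2" using isof_bij[OF iso] .
  have SP: "S \<subseteq> Pow V1" using cov_sub[OF cov] .
  have cl: "is_clique V2 E2 (f ` C)" if "C \<in> S" for C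
  proof -
    have c: "is_clique V1 E1 C" using cov that unfolding total_clique_covering_def by auto
    then have "C \<subseteq> V1" unfolding is_clique_def by auto
    then have sub: "f ` C \<subseteq> V2" using b unfolding bij_betw_def by auto
    have "(x', y') \<in> E2" if xy: "x' \<in> f ` C" "y' \<in> f ` C" "x' \<noteq> y'" for x' y'
    proof -
      obtain a bb where ab: "a \<in> C" "bb \<in> C" "x' = f a" "y' = f bb" using xy by auto
      then have "a \<noteq> bb" using xy by auto
      then have "(a, bb) \<in> E1" using c ab unfolding is_clique_def by auto
      moreover have "a \<in> V1" "bb \<in> V1" using ab \<open>C \<subseteq> V1\<close> by auto
      ultimately show ?thesis using isof_edge[OF iso \<open>a \<in> V1\<close> \<open>bb \<in> V1\<close>] ab by simp
    qed
    then show ?thesis using sub unfolding is_clique_def by blast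
  qed
  have vc: "\<exists>C'\<in>(`) f ` S. w \<in> C'" if w: "w \<in> V2" for w
  proof -
    obtain v where v: "v \<in> V1" "w = f v" using b w unfolding bij_betw_def by auto
    then obtain C where "C \<in> S" "v \<in> C" using cov unfolding total_clique_covering_def by auto
    then show ?thesis using v by blast
  qed
  have ec: "\<exists>C'\<in>(`) f ` S. x' \<in> C' \<and> y' \<in> C'" if e: "(x', y') \<in> E2" for x' y'
  proof -
    have "x' \<in> V2" "y' \<in> V2" using sgE[OF g2 e] by auto
    then obtain x y where xy: "x \<in> V1" "y \<in> V1" "x' = f x" "y' = f y" using b unfolding bij_betw_def by auto
    then have "(x, y) \<in> E1" using isof_edge[OF iso xy(1,2)] e by simp
    then have "\<exists>C\<in>S. x \<in> C \<and> y \<in> C" using cov unfolding total_clique_covering_def by blast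
    then obtain C where "C \<in> S" "x \<in> C" "y \<in> C" by blast
    then show ?thesis using xy by blast
  qed
  have c1: "\<forall>C'\<in>(`) f ` S. is_clique V2 E2 C'" using cl by blast
  have c3: "\<forall>(x, y)\<in>E2. \<exists>C\<in>(`) f ` S. x \<in> C \<and> y \<in> C" using ec by auto
  show ?thesis unfolding total_clique_covering_def using c1 vc c3 by blast
qed

lemma card_transport: assumes "bij_betw f V1 V2" "S \<subseteq> Pow V1"
  shows "card ((`) f ` S) = card S"
  using assms by (meson bij_betw_def card_image inj_on_image_Pow inj_on_subset)

lemma theta_le_iso: assumes iso: "isof f V1 E1 V2 E2" and g1: "simple_graph V1 E1" and g2: "simple_graph V2 E2"
  shows "theta_t V2 E2 \<le> theta_t V1 E1"
proof -
  obtain S where S: "total_clique_covering V1 E1 S" "finite S" "card S = theta_t V1 E1"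
    using theta_ex[OF g1] by blast
  have "total_clique_covering V2 E2 ((`) f ` S)" using cov_transport[OF iso g2 S(1)] .
  moreover have "card ((`) f ` S) = card S" using card_transport[OF isof_bij[OF iso] cov_sub[OF S(1)]] .
  ultimately show ?thesis using theta_le S by (metis finite_imageI)
qed

lemma theta_eq_iso: assumes iso: "isof f V1 E1 V2 E2" and g1: "simple_graph V1 E1" and g2: "simple_graph V2 E2"
  shows "theta_t V2 E2 = theta_t V1 E1"
  using theta_le_iso[OF iso g1 g2] theta_le_iso[OF isof_inv[OF iso] g2 g1] by simp

lemma isolated_iso: assumes iso: "isof f V1 E1 V2 E2" and g1: "simple_graph V1 E1" and g2: "simple_graph V2 E2"
  and v: "v \<in> V1"
  shows "isolated V2 E2 (f v) \<longleftrightarrow> isolated V1 E1 v"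
proof -
  have b: "bij_betw f V1 V2" using isof_bij[OF iso] .
  have fv: "f v \<in> V2" using b v unfolding bij_betw_def by auto
  have "(\<exists>u'. (f v, u') \<in> E2) \<longleftrightarrow> (\<exists>u. (v, u) \<in> E1)"
  proof
    assume "\<exists>u'. (f v, u') \<in> E2"
    then obtain u' where u': "(f v, u') \<in> E2" by blast
    then have "u' \<in> V2" using sgE[OF g2] by blast
    then obtain u where "u \<in> V1" "u' = f u" using b unfolding bij_betw_def by auto
    then show "\<exists>u. (v, u) \<in> E1" using u' isof_edge[OF iso v] by blast
  next
    assume "\<exists>u. (v, u) \<in> E1"
    then obtain u where u: "(v, u) \<in> E1" by blast
    then have "u \<in> V1" using sgE[OF g1] by blast
    then show "\<exists>u'. (f v, u') \<in> E2" using u isof_edge[OF iso v] by blast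
  qed
  then show ?thesis unfolding isolated_def using v fv by blast
qed

lemma isoV_iso: assumes iso: "isof f V1 E1 V2 E2" and g1: "simple_graph V1 E1" and g2: "simple_graph V2 E2"
  shows "isolated_vertices V2 E2 = f ` isolated_vertices V1 E1"
proof
  have b: "bij_betw f V1 V2" using isof_bij[OF iso] .
  show "isolated_vertices V2 E2 \<subseteq> f ` isolated_vertices V1 E1"
  proof
    fix w assume w: "w \<in> isolated_vertices V2 E2"
    then have "w \<in> V2" unfolding isolated_vertices_def isolated_def by auto
    then obtain v where v: "v \<in> V1" "w = f v" using b unfolding bij_betw_def by auto
    then show "w \<in> f ` isolated_vertices V1 E1"
      using w isolated_iso[OF iso g1 g2 v(1)] unfolding isolated_vertices_def by auto
  qed
  show "f ` isolated_vertices V1 E1 \<subseteq> isolated_vertices V2 E2"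
  proof
    fix w assume "w \<in> f ` isolated_vertices V1 E1"
    then obtain v where v: "v \<in> isolated_vertices V1 E1" "w = f v" by auto
    then have "v \<in> V1" unfolding isolated_vertices_def isolated_def by auto
    then show "w \<in> isolated_vertices V2 E2"
      using v isolated_iso[OF iso g1 g2] unfolding isolated_vertices_def by auto
  qed
qed

lemma k_iso: assumes iso: "isof f V1 E1 V2 E2" and g1: "simple_graph V1 E1" and g2: "simple_graph V2 E2"
  shows "theta_t V2 E2 - card (isolated_vertices V2 E2) = theta_t V1 E1 - card (isolated_vertices V1 E1)"
proof -
  have "inj_on f (isolated_vertices V1 E1)"
    using isof_bij[OF iso] unfolding bij_betw_def isolated_vertices_def isolated_def
    by (auto intro: inj_on_subset)
  then show ?thesis using theta_eq_iso[OF iso g1 g2] isoV_iso[OF iso g1 g2] by (simp add: card_image)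
qed



lemma cs_sub: assumes iso: "isof f V1 E1 V2 E2" and g1: "simple_graph V1 E1" and g2: "simple_graph V2 E2"
  and cov: "total_clique_covering V1 E1 S"
  shows "cs V1 E1 S \<subseteq> cs V2 E2 ((`) f ` S)"
proof
  let ?T = "(`) f"
  let ?g = "inv_into V1 f"
  let ?S1 = "S - IS V1 E1"
  let ?P = "first_primes (theta_t V1 E1 - card (isolated_vertices V1 E1))"
  have b: "bij_betw f V1 V2" using isof_bij[OF iso] .
  have inj: "inj_on f V1" using b unfolding bij_betw_def by auto
  have SP: "S \<subseteq> Pow V1" using cov_sub[OF cov] .
  have ISP: "IS V1 E1 \<subseteq> Pow V1" unfolding isolated_vertices_def isolated_def by auto
  have S1P: "?S1 \<subseteq> Pow V1" using SP by auto
  have IS2: "IS V2 E2 = ?T ` IS V1 E1"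
    using isoV_iso[OF iso g1 g2] by (simp add: image_image)
  have d: "?T ` ?S1 = ?T ` S - ?T ` IS V1 E1"
    by (rule inj_on_image_set_diff[OF inj_on_image_Pow[OF inj]]) (use SP ISP in auto)
  have S2: "?T ` S - IS V2 E2 = ?T ` ?S1"
    unfolding IS2 by (rule d[symmetric])
  have gf: "?g ` f ` C = C" if "C \<in> Pow V1" for C
    using inv_into_image_cancel[OF inj] that by auto
  have kk: "theta_t V2 E2 - card (isolated_vertices V2 E2) = theta_t V1 E1 - card (isolated_vertices V1 E1)"
    using k_iso[OF iso g1 g2] .
  fix x assume "x \<in> cs V1 E1 S"
  then obtain p where p: "x = coding_sequence V1 E1 S p" "bij_betw p ?S1 ?P" unfolding cs_def by blast
  define p' where "p' = p \<circ> (`) ?g"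
  have p'T: "p' (f ` C) = p C" if "C \<in> ?S1" for C
    unfolding p'_def using gf S1P that by auto
  have bg: "bij_betw ((`) ?g) (?T ` ?S1) ?S1"
  proof (rule bij_betw_byWitness[where f' = ?T])
    show "\<forall>a\<in>?T ` ?S1. ?T (?g ` a) = a"
    proof
      fix a assume "a \<in> ?T ` ?S1"
      then obtain C where C: "C \<in> ?S1" "a = f ` C" by blast
      then have "C \<in> Pow V1" using S1P by blast
      then have "?g ` a = C" using gf[of C] C(2) by simp
      then show "?T (?g ` a) = a" using C(2) by simp
    qed
    show "\<forall>a'\<in>?S1. ?g ` (?T a') = a'" using gf S1P by auto
    show "(`) ?g ` ?T ` ?S1 \<subseteq> ?S1" using gf S1P by auto
    show "?T ` ?S1 \<subseteq> ?T ` ?S1" by simp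
  qed
  have bp': "bij_betw p' (?T ` S - IS V2 E2) ?P"
    unfolding S2 p'_def using bij_betw_trans[OF bg p(2)] .
  have lab_eq: "lab V2 E2 (?T ` S) p' (f v) = lab V1 E1 S p v" if v: "v \<in> V1" for v
  proof -
    have iv: "isolated V2 E2 (f v) \<longleftrightarrow> isolated V1 E1 v" using isolated_iso[OF iso g1 g2 v] .
    have set_eq: "{C \<in> ?T ` S - IS V2 E2. f v \<in> C} = ?T ` {C \<in> ?S1. v \<in> C}"
    proof -
      have "f v \<in> f ` C \<longleftrightarrow> v \<in> C" if "C \<in> ?S1" for C
        using inj v S1P that unfolding inj_on_def by auto
      then show ?thesis unfolding S2 by auto
    qed
    have injT: "inj_on ?T {C \<in> ?S1. v \<in> C}"
    proof (rule inj_on_subset[OF inj_on_image_Pow[OF inj]])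
      show "{C \<in> ?S1. v \<in> C} \<subseteq> Pow V1" using S1P by blast
    qed
    have "(\<Prod>C\<in>{C \<in> ?T ` S - IS V2 E2. f v \<in> C}. p' C) = (\<Prod>C\<in>{C \<in> ?S1. v \<in> C}. p' (?T C))"
      unfolding set_eq using prod.reindex[OF injT, of p'] by simp
    also have "\<dots> = (\<Prod>C\<in>{C \<in> ?S1. v \<in> C}. p C)"
      by (rule prod.cong) (use p'T in auto)
    finally show ?thesis unfolding lab_def using iv by simp
  qed
  have mV: "mset_set V2 = image_mset f (mset_set V1)"
    using image_mset_mset_set[OF inj] b unfolding bij_betw_def by simp
  have fV1: "finite V1" using g1 unfolding simple_graph_def by auto
  have "image_mset (lab V2 E2 (?T ` S) p') (mset_set V2) = image_mset (lab V2 E2 (?T ` S) p' \<circ> f) (mset_set V1)"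
    unfolding mV by (simp add: multiset.map_comp)
  also have "\<dots> = image_mset (lab V1 E1 S p) (mset_set V1)"
    by (rule image_mset_cong) (use lab_eq fV1 in auto)
  finally have "image_mset (lab V2 E2 (?T ` S) p') (mset_set V2) = image_mset (lab V1 E1 S p) (mset_set V1)" .
  then have "coding_sequence V2 E2 (?T ` S) p' = x"
    unfolding p(1) coding_lab by simp
  then show "x \<in> cs V2 E2 (?T ` S)"
    unfolding cs_def using bp' kk by auto
qed

lemma sc_eq: assumes iso: "isof f V1 E1 V2 E2" and g1: "simple_graph V1 E1" and g2: "simple_graph V2 E2"
  and cov: "total_clique_covering V1 E1 S"
  shows "cs V2 E2 ((`) f ` S) = cs V1 E1 S"
proof
  show "cs V1 E1 S \<subseteq> cs V2 E2 ((`) f ` S)" using cs_sub[OF iso g1 g2 cov] .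
  have inj: "inj_on f V1" using isof_bij[OF iso] unfolding bij_betw_def by auto
  have SP: "S \<subseteq> Pow V1" using cov_sub[OF cov] .
  have bk: "(`) (inv_into V1 f) ` (`) f ` S = S"
  proof -
    have "(`) (inv_into V1 f) ` (`) f ` S = (\<lambda>C. inv_into V1 f ` f ` C) ` S" by (simp add: image_image)
    also have "\<dots> = (\<lambda>C. C) ` S" by (rule image_cong) (use SP inv_into_image_cancel[OF inj] in blast)+
    also have "\<dots> = S" by simp
    finally show ?thesis .
  qed
  show "cs V2 E2 ((`) f ` S) \<subseteq> cs V1 E1 S"
    using cs_sub[OF isof_inv[OF iso] g2 g1 cov_transport[OF iso g2 cov]] unfolding bk .
qed

lemma SC_sub: assumes iso: "isof f V1 E1 V2 E2" and g1: "simple_graph V1 E1" and g2: "simple_graph V2 E2"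
  shows "SC V1 E1 \<subseteq> SC V2 E2"
proof
  fix x assume "x \<in> SC V1 E1"
  then obtain S where S: "x = sigma_cover V1 E1 S" "total_clique_covering V1 E1 S" "finite S" "card S = theta_t V1 E1"
    unfolding SC_def by blast
  have c: "total_clique_covering V2 E2 ((`) f ` S)" using cov_transport[OF iso g2 S(2)] .
  have "card ((`) f ` S) = theta_t V2 E2"
    using card_transport[OF isof_bij[OF iso] cov_sub[OF S(2)]] S(4) theta_eq_iso[OF iso g1 g2] by simp
  moreover have "sigma_cover V2 E2 ((`) f ` S) = x"
    unfolding S(1) sigma_cover_cs using sc_eq[OF iso g1 g2 S(2)] by simp
  ultimately show "x \<in> SC V2 E2" unfolding SC_def using c S(3) by blast
qed

lemma backward: assumes g1: "simple_graph V1 E1" and g2: "simple_graph V2 E2"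
  and gi: "graph_iso V1 E1 V2 E2"
  shows "sigma_code V1 E1 = sigma_code V2 E2"
proof -
  obtain f where iso: "isof f V1 E1 V2 E2" using gi unfolding graph_iso_def isof_def by blast
  have "SC V1 E1 = SC V2 E2"
    using SC_sub[OF iso g1 g2] SC_sub[OF isof_inv[OF iso] g2 g1] by blast
  then show ?thesis unfolding sigma_code_SC by simp
qed


theorem theorem3:
  fixes V1 :: "'a set" and E1 :: "('a \<times> 'a) set"
    and V2 :: "'b set" and E2 :: "('b \<times> 'b) set"
  assumes "simple_graph V1 E1" and "simple_graph V2 E2"
  shows "graph_iso V1 E1 V2 E2 \<longleftrightarrow> sigma_code V1 E1 = sigma_code V2 E2"
  using forward[OF assms] backward[OF assms] by blast

end
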